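(* Let $\sigma$ be a relational vocabulary, let $\mathscr{A}$ be a finite $\sigma$-structure with universe $A$, and let $k>0$. There is a bijective correspondence between (1) $\mathbb{E}_k$-coalgebras $\alpha : \mathscr{A} \to \mathbb{E}_k \mathscr{A}$, and (2) forest covers of the Gaifman graph $\mathcal{G}(\mathscr{A})$ of height $\leq k$.
   Context: A relational vocabulary $\sigma$ is a set of relation symbols $R$, each with an arity $n>0$. A $\sigma$-structure $\mathscr{A}$ consists of a universe $A$ and relations $R^{\mathscr{A}} \subseteq A^n$ for each $R\in\sigma$ of arity $n$. A homomorphism $f:\mathscr{A}\to\mathscr{B}$ is a function $f:A\to B$ with $(a_1,\dots,a_n)\in R^{\mathscr{A}} \Rightarrow (f(a_1),\dots,f(a_n))\in R^{\mathscr{B}}$; these form the category $\mathcal{R}(\sigma)$. The Ehrenfeucht–Fraïssé comonad $\mathbb{E}_k$ on $\mathcal{R}(\sigma)$: the universe of $\mathbb{E}_k\mathscr{A}$ is $A^{\leq k}$, the set of non-empty sequences of elements of $A$ of length $\leq k$. For $R\in\sigma$ of arity $n$, $R^{\mathbb{E}_k\mathscr{A}}$ is the set of tuples $(s_1,\dots,s_n)$ of such sequences which are pairwise comparable in the prefix order $\sqsubseteq$ and satisfy $R^{\mathscr{A}}(\varepsilon_{\mathscr{A}}(s_1),\dots,\varepsilon_{\mathscr{A}}(s_n))$, where the counit $\varepsilon_{\mathscr{A}}:\mathbb{E}_k\mathscr{A}\to\mathscr{A}$ sends $[a_1,\dots,a_n]$ to $a_n$. On a homomorphism $h$, $\mathbb{E}_k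 h[a_1,\dots,a_j]=[h(a_1),\dots,h(a_j)]$; the comultiplication $\delta_{\mathscr{A}}:\mathbb{E}_k\mathscr{A}\to\mathbb{E}_k\mathbb{E}_k\mathscr{A}$ sends $[a_1,\dots,a_j]$ to $[[a_1],[a_1,a_2],\dots,[a_1,\dots,a_j]]$. An $\mathbb{E}_k$-coalgebra on $\mathscr{A}$ is a homomorphism $\alpha:\mathscr{A}\to\mathbb{E}_k\mathscr{A}$ with $\delta_{\mathscr{A}}\circ\alpha=\mathbb{E}_k\alpha\circ\alpha$ and $\varepsilon_{\mathscr{A}}\circ\alpha=\mathrm{id}_{\mathscr{A}}$. The Gaifman graph $\mathcal{G}(\mathscr{A})=(A,\frown)$ has $a\frown a'$ iff for some $R\in\sigma$ and some $(a_1,\dots,a_n)\in R^{\mathscr{A}}$, $a=a_i$, $a'=a_j$ with $i\neq j$. In a poset, $x\uparrow y$ means $x\leq y$ or $y\leq x$; a chain is a subset whose elements are pairwise comparable. A forest is a poset $(F,\leq)$ in which the set of predecessors of every element is a finite chain; its height is $\sup_C|C|$ over chains $C$. A forest cover of a graph $G=(V,\frown)$ is a forest $(F,\leq)$ with $V\subseteq F$ such that $v\frown v'$ implies $v\uparrow v'$. *)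

theory Defs
  imports Main "HOL-Library.Sublist" "HOL-Library.FuncSet"
begin

text \<open>A relational vocabulary is a set of symbols sig with an arity function ar.
A structure consists of a universe A and an interpretation rel R (a set of tuples,
represented as lists of length ar R).\<close>

definition is_structure :: "'r set \<Rightarrow> ('r \<Rightarrow> nat) \<Rightarrow> 'a set \<Rightarrow> ('r \<Rightarrow> 'a list set) \<Rightarrow> bool" where
  "is_structure sig ar A rel \<longleftrightarrow>
     (\<forall>R\<in>sig. 0 < ar R \<and> rel R \<subseteq> {t. length t = ar R \<and> set t \<subseteq> A})"

definition is_hom :: "'r set \<Rightarrow> 'a set \<Rightarrow> ('r \<Rightarrow> 'a list set) \<Rightarrow> 'b set \<Rightarrow> ('r \<Rightarrow> 'b list set)
                       \<Rightarrow> ('a \<Rightarrow> 'b) \<Rightarrow> bool" where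
  "is_hom sig A relA B relB f \<longleftrightarrow>
     (\<forall>a\<in>A. f a \<in> B) \<and> (\<forall>R\<in>sig. \<forall>t\<in>relA R. map f t \<in> relB R)"

definition Ek_univ :: "nat \<Rightarrow> 'a set \<Rightarrow> 'a list set" where
  "Ek_univ k A = {s. s \<noteq> [] \<and> length s \<le> k \<and> set s \<subseteq> A}"

definition Ek_counit :: "'a list \<Rightarrow> 'a" where
  "Ek_counit s = last s"

definition Ek_rel :: "nat \<Rightarrow> 'a set \<Rightarrow> ('r \<Rightarrow> 'a list set) \<Rightarrow> 'r \<Rightarrow> 'a list list set" where
  "Ek_rel k A rel R = {ts. set ts \<subseteq> Ek_univ k A \<and>
      (\<forall>i<length ts. \<forall>j<length ts. prefix (ts!i) (ts!j) \<or> prefix (ts!j) (ts!i)) \<and>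
      map Ek_counit ts \<in> rel R}"

definition Ek_map :: "('a \<Rightarrow> 'b) \<Rightarrow> 'a list \<Rightarrow> 'b list" where
  "Ek_map h s = map h s"

definition Ek_delta :: "'a list \<Rightarrow> 'a list list" where
  "Ek_delta s = map (\<lambda>i. take i s) [1..<Suc (length s)]"

text \<open>E_k-coalgebra on the structure (A, rel). As a function on A we take it
extensional (undefined outside A), so that coalgebras are determined by their values on A.\<close>
definition Ek_coalgebra :: "'r set \<Rightarrow> nat \<Rightarrow> 'a set \<Rightarrow> ('r \<Rightarrow> 'a list set) \<Rightarrow> ('a \<Rightarrow> 'a list) \<Rightarrow> bool" where
  "Ek_coalgebra sig k A rel \<alpha> \<longleftrightarrow>
     \<alpha> \<in> extensional A \<and>
     is_hom sig A rel (Ek_univ k A) (Ek_rel k A rel) \<alpha> \<and>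
     (\<forall>a\<in>A. Ek_delta (\<alpha> a) = Ek_map \<alpha> (\<alpha> a)) \<and>
     (\<forall>a\<in>A. Ek_counit (\<alpha> a) = a)"

definition gaifman_adj :: "'r set \<Rightarrow> ('r \<Rightarrow> 'a list set) \<Rightarrow> 'a \<Rightarrow> 'a \<Rightarrow> bool" where
  "gaifman_adj sig rel a a' \<longleftrightarrow>
     (\<exists>R\<in>sig. \<exists>t\<in>rel R. \<exists>i<length t. \<exists>j<length t. i \<noteq> j \<and> t!i = a \<and> t!j = a')"

definition is_chain :: "('a \<times> 'a) set \<Rightarrow> 'a set \<Rightarrow> bool" where
  "is_chain le C \<longleftrightarrow> (\<forall>x\<in>C. \<forall>y\<in>C. (x,y) \<in> le \<or> (y,x) \<in> le)"

definition is_forest :: "'a set \<Rightarrow> ('a \<times> 'a) set \<Rightarrow> bool" where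
  "is_forest F le \<longleftrightarrow> le \<subseteq> F \<times> F \<and> partial_order_on F le \<and>
     (\<forall>x\<in>F. finite {y. (y,x) \<in> le} \<and> is_chain le {y. (y,x) \<in> le})"

definition height_le :: "'a set \<Rightarrow> ('a \<times> 'a) set \<Rightarrow> nat \<Rightarrow> bool" where
  "height_le F le k \<longleftrightarrow> (\<forall>C\<subseteq>F. is_chain le C \<longrightarrow> finite C \<and> card C \<le> k)"

definition gaifman_forest_cover :: "'r set \<Rightarrow> 'a set \<Rightarrow> ('r \<Rightarrow> 'a list set) \<Rightarrow> ('a \<times> 'a) set \<Rightarrow> bool" where
  "gaifman_forest_cover sig A rel le \<longleftrightarrow> is_forest A le \<and>
     (\<forall>a\<in>A. \<forall>a'\<in>A. gaifman_adj sig rel a a' \<longrightarrow> (a,a') \<in> le \<or> (a',a) \<in> le)"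

end

theory Submission imports Defs begin
lemma sorted_unique:
  assumes "sorted_wrt r xs" "sorted_wrt r ys" "set xs = set ys" "\<And>x y. r x y \<Longrightarrow> \<not> r y x"
  shows "xs = ys"
  using assms
proof (induction xs arbitrary: ys)
  case Nil then show ?case by simp
next
  case (Cons x xs)
  then obtain y ys' where ys: "ys = y # ys'" by (cases ys) auto
  have irr: "\<And>z. \<not> r z z" using Cons.prems(4) by blast
  have xy: "x = y"
  proof (rule ccontr)
    assume "x \<noteq> y"
    then have "y \<in> set xs" "x \<in> set ys'" using Cons.prems(3) ys by auto
    then have "r x y" "r y x" using Cons.prems(1,2) ys by auto
    then show False using Cons.prems(4) by blast
  qed
  have "x \<notin> set xs" using Cons.prems(1) irr by auto
  moreover have "y \<notin> set ys'" using Cons.prems(2) irr ys by auto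
  ultimately have "set xs = set ys'" using Cons.prems(3) ys xy by auto
  then have "xs = ys'" using Cons ys by auto
  then show ?case using xy ys by simp
qed

lemma exists_sorted:
  fixes f :: "'a \<Rightarrow> nat"
  assumes "finite S" "\<And>x y. x\<in>S \<Longrightarrow> y\<in>S \<Longrightarrow> x\<noteq>y \<Longrightarrow> r x y \<or> r y x"
    "\<And>x y. x\<in>S \<Longrightarrow> y\<in>S \<Longrightarrow> r x y \<Longrightarrow> f x < f y"
  shows "\<exists>l. set l = S \<and> sorted_wrt r l"
proof -
  obtain l0 where l0: "set l0 = S" "distinct l0" using finite_distinct_list[OF assms(1)] by blast
  define l where "l = sort_key f l0"
  have s: "set l = S" using l0 by (simp add: l_def)
  have d: "distinct l" using l0 by (simp add: l_def)
  have so: "sorted (map f l)" unfolding l_def by (rule sorted_sort_key)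
  have "sorted_wrt r l"
    unfolding sorted_wrt_iff_nth_less
  proof (intro allI impI)
    fix i j assume ij: "i < j" "j < length l"
    have le: "f (l!i) \<le> f (l!j)" using so ij by (simp add: sorted_iff_nth_mono)
    have ne: "l!i \<noteq> l!j" using d ij by (simp add: nth_eq_iff_index_eq)
    have mem: "l!i \<in> S" "l!j \<in> S" using ij s by auto
    show "r (l!i) (l!j)" using assms(2)[OF mem ne] assms(3)[OF mem(2) mem(1)] le by fastforce
  qed
  then show ?thesis using s by blast
qed

lemma prefix_take_mono: "i \<le> j \<Longrightarrow> prefix (take i xs) (take j xs)"
  by (metis min.absorb1 take_is_prefix take_take)

lemma prefix_same_length: "prefix xs ys \<Longrightarrow> length xs = length ys \<Longrightarrow> xs = ys"
  by (metis prefix_length_le prefix_order.eq_iff prefix_length_prefix order_refl)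


definition Phi :: "'a set \<Rightarrow> ('a \<Rightarrow> 'a list) \<Rightarrow> ('a \<times> 'a) set" where
  "Phi A \<alpha> = {(x,y). x \<in> A \<and> y \<in> A \<and> prefix (\<alpha> x) (\<alpha> y)}"

definition ltr :: "('a \<times> 'a) set \<Rightarrow> 'a \<Rightarrow> 'a \<Rightarrow> bool" where
  "ltr le x y \<longleftrightarrow> (x,y) \<in> le \<and> x \<noteq> y"

definition Psi :: "'a set \<Rightarrow> ('a \<times> 'a) set \<Rightarrow> 'a \<Rightarrow> 'a list" where
  "Psi A le = restrict (\<lambda>a. SOME l. set l = {y. (y,a) \<in> le} \<and> sorted_wrt (ltr le) l) A"

context
  fixes sig :: "'r set" and A :: "'a set" and rel :: "'r \<Rightarrow> 'a list set" and k :: nat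
    and \<alpha> :: "'a \<Rightarrow> 'a list"
  assumes C: "Ek_coalgebra sig k A rel \<alpha>"
begin

lemma c1: "a \<in> A \<Longrightarrow> \<alpha> a \<noteq> [] \<and> length (\<alpha> a) \<le> k \<and> set (\<alpha> a) \<subseteq> A"
  using C unfolding Ek_coalgebra_def is_hom_def Ek_univ_def by blast

lemma c2: "a \<in> A \<Longrightarrow> last (\<alpha> a) = a"
  using C unfolding Ek_coalgebra_def Ek_counit_def by blast

lemma c3: assumes "a \<in> A" "i < length (\<alpha> a)"
  shows "\<alpha> ((\<alpha> a)!i) = take (Suc i) (\<alpha> a)"
proof -
  have "Ek_delta (\<alpha> a) = map \<alpha> (\<alpha> a)" using C assms(1) unfolding Ek_coalgebra_def Ek_map_def by blast
  then have "Ek_delta (\<alpha> a) ! i = map \<alpha> (\<alpha> a) ! i" by simp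
  then show ?thesis using assms(2) unfolding Ek_delta_def by (simp del: upt_Suc)
qed

lemma c4: "x \<in> A \<Longrightarrow> y \<in> A \<Longrightarrow> prefix (\<alpha> x) (\<alpha> y) \<Longrightarrow> x \<in> set (\<alpha> y)"
  by (metis c1 c2 last_in_set set_mono_prefix subsetD)

lemma c5: assumes "y \<in> A" "x \<in> set (\<alpha> y)" shows "x \<in> A \<and> prefix (\<alpha> x) (\<alpha> y)"
proof -
  obtain i where i: "i < length (\<alpha> y)" "x = (\<alpha> y)!i" using assms(2) by (auto simp: in_set_conv_nth)
  show ?thesis using c3[OF assms(1) i(1)] i c1[OF assms(1)] assms(2) by (auto simp: take_is_prefix)
qed

lemma c6: "x \<in> A \<Longrightarrow> y \<in> A \<Longrightarrow> \<alpha> x = \<alpha> y \<Longrightarrow> x = y"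
  using c2 by metis

lemma c7: "x \<in> A \<Longrightarrow> y \<in> A \<Longrightarrow> prefix (\<alpha> x) (\<alpha> y) \<Longrightarrow> length (\<alpha> x) = length (\<alpha> y) \<Longrightarrow> x = y"
  using c6 prefix_same_length by metis

lemma c_comparable: assumes "a \<in> A" "x \<in> set (\<alpha> a)" "y \<in> set (\<alpha> a)"
  shows "prefix (\<alpha> x) (\<alpha> y) \<or> prefix (\<alpha> y) (\<alpha> x)"
proof -
  obtain i where i: "i < length (\<alpha> a)" "x = (\<alpha> a)!i" using assms(2) by (auto simp: in_set_conv_nth)
  obtain j where j: "j < length (\<alpha> a)" "y = (\<alpha> a)!j" using assms(3) by (auto simp: in_set_conv_nth)
  show ?thesis using c3[OF assms(1) i(1)] c3[OF assms(1) j(1)] i(2) j(2)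
    by (metis nat_le_linear prefix_take_mono Suc_le_mono)
qed

lemma c_pred: assumes "x \<in> A" shows "{y. (y,x) \<in> Phi A \<alpha>} = set (\<alpha> x)"
proof
  show "{y. (y,x) \<in> Phi A \<alpha>} \<subseteq> set (\<alpha> x)" using c4 assms unfolding Phi_def by blast
  show "set (\<alpha> x) \<subseteq> {y. (y,x) \<in> Phi A \<alpha>}" using c5 assms unfolding Phi_def by blast
qed

lemma c_forest: "gaifman_forest_cover sig A rel (Phi A \<alpha>)"
proof -
  have po: "partial_order_on A (Phi A \<alpha>)"
    unfolding partial_order_on_def preorder_on_def refl_on_def trans_def antisym_def Phi_def
    using c6 by (auto intro: prefix_order.trans dest: prefix_order.antisym)
  note pred = c_pred
  have ch: "is_chain (Phi A \<alpha>) {y. (y,x) \<in> Phi A \<alpha>}" if "x \<in> A" for x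
    unfolding pred[OF that] is_chain_def using c_comparable[OF that] c1[OF that]
    unfolding Phi_def by blast
  have fo: "is_forest A (Phi A \<alpha>)"
    unfolding is_forest_def using po ch pred by (simp add: Phi_def subset_iff)
  have adj: "(a,a') \<in> Phi A \<alpha> \<or> (a',a) \<in> Phi A \<alpha>"
    if aA: "a \<in> A" "a' \<in> A" "gaifman_adj sig rel a a'" for a a'
  proof -
    obtain R t i j where R: "R \<in> sig" "t \<in> rel R" "i < length t" "j < length t" "t!i = a" "t!j = a'"
      using aA(3) unfolding gaifman_adj_def by blast
    have "map \<alpha> t \<in> Ek_rel k A rel R" using C R(1,2) unfolding Ek_coalgebra_def is_hom_def by blast
    then have "prefix (map \<alpha> t ! i) (map \<alpha> t ! j) \<or> prefix (map \<alpha> t ! j) (map \<alpha> t ! i)"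
      using R(3,4) unfolding Ek_rel_def by auto
    then show ?thesis using R aA unfolding Phi_def by simp
  qed
  show ?thesis unfolding gaifman_forest_cover_def using fo adj by blast
qed

lemma c_height: assumes "finite A" shows "height_le A (Phi A \<alpha>) k"
  unfolding height_le_def
proof (intro allI impI)
  fix D assume D: "D \<subseteq> A" "is_chain (Phi A \<alpha>) D"
  have fin: "finite D" using D(1) assms finite_subset by blast
  have inj: "inj_on (\<lambda>x. length (\<alpha> x)) D"
  proof (rule inj_onI)
    fix x y assume xy: "x \<in> D" "y \<in> D" "length (\<alpha> x) = length (\<alpha> y)"
    then have "(x,y) \<in> Phi A \<alpha> \<or> (y,x) \<in> Phi A \<alpha>" using D(2) unfolding is_chain_def by blast
    then show "x = y" using c7 xy unfolding Phi_def by (metis (no_types, lifting) case_prodD mem_Collect_eq)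
  qed
  have img: "(\<lambda>x. length (\<alpha> x)) ` D \<subseteq> {1..k}"
    using c1 D(1) by (force simp: Suc_le_eq)
  have "card D \<le> card {1..k}" using card_inj_on_le[OF inj img] by simp
  then show "finite D \<and> card D \<le> k" using fin by simp
qed

lemma c_sorted: assumes "a \<in> A" shows "sorted_wrt (ltr (Phi A \<alpha>)) (\<alpha> a)"
  unfolding sorted_wrt_iff_nth_less
proof (intro allI impI)
  fix i j assume ij: "i < j" "j < length (\<alpha> a)"
  have e1: "\<alpha> ((\<alpha> a)!i) = take (Suc i) (\<alpha> a)" using c3 assms ij by simp
  have e2: "\<alpha> ((\<alpha> a)!j) = take (Suc j) (\<alpha> a)" using c3 assms ij by simp
  have inA: "(\<alpha> a)!i \<in> A" "(\<alpha> a)!j \<in> A" using c1[OF assms] ij by (auto simp: subset_iff)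
  have ne: "(\<alpha> a)!i \<noteq> (\<alpha> a)!j"
  proof
    assume "(\<alpha> a)!i = (\<alpha> a)!j"
    then have "take (Suc i) (\<alpha> a) = take (Suc j) (\<alpha> a)" using e1 e2 by simp
    then have "length (take (Suc i) (\<alpha> a)) = length (take (Suc j) (\<alpha> a))" by simp
    then show False using ij by simp
  qed
  show "ltr (Phi A \<alpha>) ((\<alpha> a)!i) ((\<alpha> a)!j)"
    unfolding ltr_def Phi_def using inA ne e1 e2 ij prefix_take_mono[of "Suc i" "Suc j" "\<alpha> a"] by simp
qed

end

lemma sorted_distinct_irr: "sorted_wrt r xs \<Longrightarrow> (\<And>x. \<not> r x x) \<Longrightarrow> distinct xs"
  by (induction xs) auto

context
  fixes sig :: "'r set" and ar :: "'r \<Rightarrow> nat" and A :: "'a set" and rel :: "'r \<Rightarrow> 'a list set" and k :: nat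
    and le :: "('a \<times> 'a) set"
  assumes F: "gaifman_forest_cover sig A rel le" and H: "height_le A le k"
    and S: "is_structure sig ar A rel"
begin

lemma f0: "le \<subseteq> A \<times> A" "\<And>x. x \<in> A \<Longrightarrow> (x,x) \<in> le" "trans le" "antisym le"
  "\<And>x. x \<in> A \<Longrightarrow> finite {y. (y,x) \<in> le}" "\<And>x. x \<in> A \<Longrightarrow> is_chain le {y. (y,x) \<in> le}"
  using F unfolding gaifman_forest_cover_def is_forest_def partial_order_on_def preorder_on_def refl_on_def
  by blast+

lemma f_asym: "ltr le x y \<Longrightarrow> \<not> ltr le y x"
  using f0(4) unfolding ltr_def antisym_def by blast

lemma f_ex: assumes "a \<in> A" shows "\<exists>l. set l = {y. (y,a) \<in> le} \<and> sorted_wrt (ltr le) l"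
proof (rule exists_sorted[where f = "\<lambda>x. card {y. (y,x) \<in> le}"])
  show "finite {y. (y,a) \<in> le}" using f0(5) assms by blast
next
  fix x y assume "x \<in> {y. (y,a) \<in> le}" "y \<in> {y. (y,a) \<in> le}" "x \<noteq> y"
  then show "ltr le x y \<or> ltr le y x" using f0(6)[OF assms] unfolding is_chain_def ltr_def by blast
next
  fix x y assume xy: "x \<in> {y. (y,a) \<in> le}" "y \<in> {y. (y,a) \<in> le}" "ltr le x y"
  have yA: "y \<in> A" using xy(2) f0(1) by blast
  have sub: "{z. (z,x) \<in> le} \<subseteq> {z. (z,y) \<in> le}" using xy(3) f0(3) unfolding ltr_def trans_def by blast
  have "y \<in> {z. (z,y) \<in> le}" using f0(2) yA by blast
  moreover have "y \<notin> {z. (z,x) \<in> le}" using xy(3) f0(4) unfolding ltr_def antisym_def by blast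
  ultimately have "{z. (z,x) \<in> le} \<subset> {z. (z,y) \<in> le}" using sub by blast
  then show "card {z. (z,x) \<in> le} < card {z. (z,y) \<in> le}"
    using psubset_card_mono f0(5)[OF yA] by blast
qed

lemma f2: assumes "a \<in> A"
  shows "set (Psi A le a) = {y. (y,a) \<in> le} \<and> sorted_wrt (ltr le) (Psi A le a)"
  using someI_ex[OF f_ex[OF assms]] assms unfolding Psi_def by simp

lemma f3: assumes "a \<in> A" "set l = {y. (y,a) \<in> le}" "sorted_wrt (ltr le) l"
  shows "Psi A le a = l"
  using sorted_unique[of "ltr le" "Psi A le a" l] f2[OF assms(1)] assms(2,3) f_asym by blast

lemma f4: assumes "a \<in> A" "i < length (Psi A le a)"
  shows "Psi A le ((Psi A le a)!i) = take (Suc i) (Psi A le a)"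
proof -
  let ?l = "Psi A le a"
  let ?x = "?l!i"
  have sa: "set ?l = {y. (y,a) \<in> le}" and so: "sorted_wrt (ltr le) ?l" using f2[OF assms(1)] by auto
  have xin: "?x \<in> set ?l" using assms(2) by simp
  then have xa: "(?x,a) \<in> le" using sa by blast
  then have xA: "?x \<in> A" using f0(1) by blast
  have "set (take (Suc i) ?l) = {y. (y,?x) \<in> le}"
  proof
    show "set (take (Suc i) ?l) \<subseteq> {y. (y,?x) \<in> le}"
    proof
      fix z assume "z \<in> set (take (Suc i) ?l)"
      then obtain j where j: "j < length (take (Suc i) ?l)" "z = take (Suc i) ?l ! j"
        by (auto simp: in_set_conv_nth)
      then have j2: "j \<le> i" "z = ?l!j" using assms(2) by auto
      show "z \<in> {y. (y,?x) \<in> le}"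
      proof (cases "j = i")
        case True then show ?thesis using j2 f0(2) xA by simp
      next
        case False
        then have "ltr le z ?x" using so j2 assms(2) unfolding sorted_wrt_iff_nth_less by simp
        then show ?thesis unfolding ltr_def by simp
      qed
    qed
  next
    show "{y. (y,?x) \<in> le} \<subseteq> set (take (Suc i) ?l)"
    proof
      fix z assume "z \<in> {y. (y,?x) \<in> le}"
      then have zx: "(z,?x) \<in> le" by simp
      then have "(z,a) \<in> le" using xa f0(3) unfolding trans_def by blast
      then obtain j where j: "j < length ?l" "z = ?l!j" using sa by (metis in_set_conv_nth mem_Collect_eq)
      have "j \<le> i"
      proof (rule ccontr)
        assume "\<not> j \<le> i"
        then have "ltr le ?x z" using so j unfolding sorted_wrt_iff_nth_less by simp
        then show False using zx f0(4) unfolding ltr_def antisym_def by blast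
      qed
      then show "z \<in> set (take (Suc i) ?l)" using j by (auto simp: in_set_conv_nth intro!: exI[of _ j])
    qed
  qed
  moreover have "sorted_wrt (ltr le) (take (Suc i) ?l)" using so by (rule sorted_wrt_take)
  ultimately show ?thesis using f3[OF xA] by blast
qed

lemma f5: assumes "a \<in> A" shows "Psi A le a \<noteq> [] \<and> last (Psi A le a) = a"
proof -
  let ?l = "Psi A le a"
  have "a \<in> set ?l" using f2[OF assms] f0(2)[OF assms] by simp
  then obtain i where i: "i < length ?l" "a = ?l!i" by (auto simp: in_set_conv_nth)
  have "?l = take (Suc i) ?l" using f4[OF assms i(1)] i(2) by simp
  then have "length ?l \<le> Suc i" by (metis length_take min.cobounded2)
  then have "length ?l = Suc i" using i(1) by simp
  then show ?thesis using i by (metis diff_Suc_1 last_conv_nth list.size(3) nat.distinct(1))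
qed

lemma f6: assumes "(x,y) \<in> le" shows "prefix (Psi A le x) (Psi A le y)"
proof -
  have yA: "y \<in> A" using assms f0(1) by blast
  have "x \<in> set (Psi A le y)" using f2[OF yA] assms by simp
  then obtain i where i: "i < length (Psi A le y)" "x = Psi A le y ! i" by (auto simp: in_set_conv_nth)
  show ?thesis using f4[OF yA i(1)] i(2) by (simp add: take_is_prefix)
qed

lemma f7: assumes "x \<in> A" "y \<in> A" "prefix (Psi A le x) (Psi A le y)" shows "(x,y) \<in> le"
proof -
  have "last (Psi A le x) \<in> set (Psi A le y)"
    using f5[OF assms(1)] assms(3) by (meson last_in_set set_mono_prefix subsetD)
  then show ?thesis using f5[OF assms(1)] f2[OF assms(2)] by simp
qed

lemma f_Phi: "Phi A (Psi A le) = le"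
  using f6 f7 f0(1) unfolding Phi_def by blast

lemma f_coalg: "Ek_coalgebra sig k A rel (Psi A le)"
proof -
  let ?p = "Psi A le"
  have univ: "?p a \<in> Ek_univ k A" if aA: "a \<in> A" for a
  proof -
    have d: "distinct (?p a)" using f2[OF aA] sorted_distinct_irr[of "ltr le" "?p a"] unfolding ltr_def by simp
    have "length (?p a) = card {y. (y,a) \<in> le}" using distinct_card[OF d] f2[OF aA] by simp
    moreover have "card {y. (y,a) \<in> le} \<le> k"
    proof -
      have "{y. (y,a) \<in> le} \<subseteq> A" using f0(1) by blast
      then show ?thesis using H f0(6)[OF aA] unfolding height_le_def by simp
    qed
    moreover have "set (?p a) \<subseteq> A" using f2[OF aA] f0(1) by blast
    ultimately show ?thesis using f5[OF aA] unfolding Ek_univ_def by simp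
  qed
  have hom: "map ?p t \<in> Ek_rel k A rel R" if R: "R \<in> sig" "t \<in> rel R" for R t
  proof -
    have tA: "set t \<subseteq> A" using S R unfolding is_structure_def by blast
    have "map Ek_counit (map ?p t) = t"
      unfolding Ek_counit_def map_map by (rule map_idI) (use f5 tA in auto)
    moreover have "set (map ?p t) \<subseteq> Ek_univ k A" using univ tA by auto
    moreover have "prefix (map ?p t ! i) (map ?p t ! j) \<or> prefix (map ?p t ! j) (map ?p t ! i)"
      if ij: "i < length t" "j < length t" for i j
    proof (cases "i = j")
      case True then show ?thesis by simp
    next
      case False
      then have "gaifman_adj sig rel (t!i) (t!j)" unfolding gaifman_adj_def using R ij by blast
      moreover have "t!i \<in> A" "t!j \<in> A" using tA ij by auto
      ultimately have "(t!i,t!j) \<in> le \<or> (t!j,t!i) \<in> le" using F unfolding gaifman_forest_cover_def by blast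
      then show ?thesis using f6 ij by auto
    qed
    ultimately show ?thesis using R unfolding Ek_rel_def by simp
  qed
  have delta: "Ek_delta (?p a) = Ek_map ?p (?p a)" if aA: "a \<in> A" for a
    unfolding Ek_delta_def Ek_map_def
    by (rule nth_equalityI) (auto simp: f4[OF aA] simp del: upt_Suc)
  show ?thesis unfolding Ek_coalgebra_def is_hom_def Ek_counit_def
  proof (intro conjI ballI)
    show "?p \<in> extensional A" unfolding Psi_def by simp
  qed (use univ hom delta f5 in auto)
qed

end

theorem theorem4:
  fixes sig :: "'r set" and ar :: "'r \<Rightarrow> nat" and A :: "'a set"
    and rel :: "'r \<Rightarrow> 'a list set" and k :: nat
  assumes "is_structure sig ar A rel" and "finite A" and "0 < k"
  shows "\<exists>\<Phi>. bij_betw \<Phi> {\<alpha>. Ek_coalgebra sig k A rel \<alpha>}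
                      {le. gaifman_forest_cover sig A rel le \<and> height_le A le k}"
proof (intro exI bij_betw_byWitness[where f' = "Psi A"])
  show "\<forall>\<alpha>\<in>{\<alpha>. Ek_coalgebra sig k A rel \<alpha>}. Psi A (Phi A \<alpha>) = \<alpha>"
  proof
    fix \<alpha> assume "\<alpha> \<in> {\<alpha>. Ek_coalgebra sig k A rel \<alpha>}"
    then have C: "Ek_coalgebra sig k A rel \<alpha>" by simp
    have F: "gaifman_forest_cover sig A rel (Phi A \<alpha>)" using c_forest[OF C] .
    have H: "height_le A (Phi A \<alpha>) k" using c_height[OF C assms(2)] .
    have ext: "\<alpha> \<in> extensional A" using C unfolding Ek_coalgebra_def by blast
    show "Psi A (Phi A \<alpha>) = \<alpha>"
    proof
      fix a show "Psi A (Phi A \<alpha>) a = \<alpha> a"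
      proof (cases "a \<in> A")
        case True
        show ?thesis using f3[OF F H assms(1) True c_pred[OF C True, symmetric] c_sorted[OF C True]] .
      next
        case False then show ?thesis using ext unfolding Psi_def by (simp add: extensional_def)
      qed
    qed
  qed
next
  show "\<forall>le\<in>{le. gaifman_forest_cover sig A rel le \<and> height_le A le k}. Phi A (Psi A le) = le"
    using f_Phi assms(1) by blast
next
  show "Phi A ` {\<alpha>. Ek_coalgebra sig k A rel \<alpha>} \<subseteq> {le. gaifman_forest_cover sig A rel le \<and> height_le A le k}"
    using c_forest c_height assms(2) by blast
next
  show "Psi A ` {le. gaifman_forest_cover sig A rel le \<and> height_le A le k} \<subseteq> {\<alpha>. Ek_coalgebra sig k A rel \<alpha>}"
    using f_coalg assms(1) by blast
qed

end
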